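(* Let $k\geq 2$ be an even integer and let $G$ be an undirected graph whose degeneracy is $k$. Then $f(G)<\frac{k}{k+2}\,n(G)$.
   Context: All graphs are finite and simple. $n(G)$ is the number of vertices and $f(G)$ is the minimum size of a feedback vertex set of $G$ (a set $F\subseteq V(G)$ with $G-F$ acyclic). An ordering $\phi$ of $V(G)$ is a $k$-elimination ordering if each vertex has at most $k$ neighbours preceding it in $\phi$; the degeneracy of $G$ is the least $k$ such that $G$ has a $k$-elimination ordering. *)

theory Defs
  imports Complex_Main
begin

definition graph :: "'a set \<Rightarrow> 'a set set \<Rightarrow> bool" where
  "graph V E \<longleftrightarrow> finite V \<and> (\<forall>e\<in>E. e \<subseteq> V \<and> card e = 2)"

definition adj :: "'a set set \<Rightarrow> 'a \<Rightarrow> 'a \<Rightarrow> bool" where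
  "adj E u v \<longleftrightarrow> {u, v} \<in> E"

definition is_cycle_in :: "'a set set \<Rightarrow> 'a set \<Rightarrow> 'a list \<Rightarrow> bool" where
  "is_cycle_in E S cs \<longleftrightarrow> length cs \<ge> 3 \<and> distinct cs \<and> set cs \<subseteq> S
     \<and> (\<forall>i < length cs - 1. adj E (cs ! i) (cs ! Suc i))
     \<and> adj E (last cs) (hd cs)"

definition acyclic_induced :: "'a set set \<Rightarrow> 'a set \<Rightarrow> bool" where
  "acyclic_induced E S \<longleftrightarrow> \<not> (\<exists>cs. is_cycle_in E S cs)"

definition feedback_vertex_set :: "'a set \<Rightarrow> 'a set set \<Rightarrow> 'a set \<Rightarrow> bool" where
  "feedback_vertex_set V E F \<longleftrightarrow> F \<subseteq> V \<and> acyclic_induced E (V - F)"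

definition fvs_number :: "'a set \<Rightarrow> 'a set set \<Rightarrow> nat" where
  "fvs_number V E = (LEAST m. \<exists>F. feedback_vertex_set V E F \<and> card F = m)"

definition elimination_ordering :: "'a set \<Rightarrow> 'a set set \<Rightarrow> nat \<Rightarrow> 'a list \<Rightarrow> bool" where
  "elimination_ordering V E k xs \<longleftrightarrow> distinct xs \<and> set xs = V \<and>
     (\<forall>i < length xs. card {j. j < i \<and> adj E (xs ! j) (xs ! i)} \<le> k)"

definition degeneracy :: "'a set \<Rightarrow> 'a set set \<Rightarrow> nat" where
  "degeneracy V E = (LEAST k. \<exists>xs. elimination_ordering V E k xs)"

end

theory Submission
  imports Defs
begin

lemma adj_sym: "adj E u v = adj E v u"
  unfolding adj_def by (simp add: insert_commute)

lemma good_acyclic: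
  assumes dxs: "distinct xs" and S: "S \<subseteq> {..<length xs}"
    and good: "\<forall>i\<in>S. card {j\<in>S. j < i \<and> adj E (xs ! j) (xs ! i)} \<le> 1"
  shows "acyclic_induced E ((!) xs ` S)"
  unfolding acyclic_induced_def
proof
  assume "\<exists>cs. is_cycle_in E ((!) xs ` S) cs"
  then obtain cs where cyc: "is_cycle_in E ((!) xs ` S) cs" by blast
  define L where "L = length cs"
  have L3: "L \<ge> 3" and dcs: "distinct cs" and sub: "set cs \<subseteq> (!) xs ` S"
    and cons: "\<forall>i < L - 1. adj E (cs ! i) (cs ! Suc i)"
    and lh: "adj E (last cs) (hd cs)"
    using cyc unfolding is_cycle_in_def L_def by auto
  have csne: "cs \<noteq> []" using L3 L_def by auto
  have lastn: "last cs = cs ! (L - 1)" using csne L_def by (simp add: last_conv_nth)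
  have hdn: "hd cs = cs ! 0" using csne by (simp add: hd_conv_nth)
  define I where "I = {i\<in>S. xs ! i \<in> set cs}"
  have "I \<subseteq> {..<length xs}" using S unfolding I_def by auto
  then have finI: "finite I" using finite_subset by blast
  have "I \<noteq> {}"
  proof -
    have "cs ! 0 \<in> set cs" using csne by simp
    then obtain i where "i \<in> S" "xs ! i = cs ! 0" using sub by force
    then show ?thesis unfolding I_def using csne by force
  qed
  define M where "M = Max I"
  have MI: "M \<in> I" using finI \<open>I \<noteq> {}\<close> M_def by simp
  have Mmax: "\<And>i. i \<in> I \<Longrightarrow> i \<le> M" using finI M_def by simp
  have MS: "M \<in> S" using MI I_def by simp
  have "xs ! M \<in> set cs" using MI I_def by simp
  then obtain p where p: "p < L" "cs ! p = xs ! M" using L_def by (metis in_set_conv_nth)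
  define pa where "pa = (if p = 0 then L - 1 else p - 1)"
  define pb where "pb = (if p = L - 1 then 0 else p + 1)"
  have pa: "pa < L" "pa \<noteq> p" unfolding pa_def using p L3 by auto
  have pb: "pb < L" "pb \<noteq> p" unfolding pb_def using p L3 by auto
  have pab: "pa \<noteq> pb" unfolding pa_def pb_def using p L3 by auto
  have adja: "adj E (cs ! pa) (cs ! p)"
  proof (cases "p = 0")
    case True
    then show ?thesis using lh lastn hdn pa_def by simp
  next
    case False
    then have "p - 1 < L - 1" "Suc (p - 1) = p" using p by auto
    then have "adj E (cs ! (p - 1)) (cs ! Suc (p - 1))" using cons by blast
    then show ?thesis using \<open>Suc (p - 1) = p\<close> False pa_def by simp
  qed
  have adjb: "adj E (cs ! pb) (cs ! p)"
  proof (cases "p = L - 1")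
    case True
    have "adj E (cs ! (L - 1)) (cs ! 0)" using lh lastn hdn by simp
    then have "adj E (cs ! 0) (cs ! (L - 1))" using adj_sym by fast
    then show ?thesis using True pb_def by simp
  next
    case False
    then have "p < L - 1" using p by auto
    then have "adj E (cs ! p) (cs ! Suc p)" using cons by blast
    then have "adj E (cs ! Suc p) (cs ! p)" using adj_sym by fast
    then show ?thesis using False pb_def by simp
  qed
  have "cs ! pa \<in> set cs" using pa L_def by simp
  then obtain ia where ia: "ia \<in> S" "xs ! ia = cs ! pa" using sub by force
  have "cs ! pb \<in> set cs" using pb L_def by simp
  then obtain ib where ib: "ib \<in> S" "xs ! ib = cs ! pb" using sub by force
  have iaI: "ia \<in> I" using ia pa L_def unfolding I_def by simp
  have ibI: "ib \<in> I" using ib pb L_def unfolding I_def by simp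
  have neq: "\<And>x y. x < L \<Longrightarrow> y < L \<Longrightarrow> x \<noteq> y \<Longrightarrow> cs ! x \<noteq> cs ! y"
    using dcs L_def nth_eq_iff_index_eq by blast
  have "ia \<noteq> M" using ia(2) p(2) neq[OF pa(1) p(1) pa(2)] by auto
  then have iaM: "ia < M" using Mmax iaI by force
  have "ib \<noteq> M" using ib(2) p(2) neq[OF pb(1) p(1) pb(2)] by auto
  then have ibM: "ib < M" using Mmax ibI by force
  have "ia \<noteq> ib" using ia(2) ib(2) neq[OF pa(1) pb(1) pab] by auto
  have sub2: "{ia, ib} \<subseteq> {j\<in>S. j < M \<and> adj E (xs ! j) (xs ! M)}"
    using ia ib iaM ibM adja adjb p by auto
  have "finite {j\<in>S. j < M \<and> adj E (xs ! j) (xs ! M)}" by simp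
  then have "card {ia, ib} \<le> card {j\<in>S. j < M \<and> adj E (xs ! j) (xs ! M)}"
    using sub2 card_mono by blast
  moreover have "card {ia, ib} = 2" using \<open>ia \<noteq> ib\<close> by simp
  ultimately show False using good MS by fastforce
qed

definition inC :: "(nat \<Rightarrow> nat) \<Rightarrow> nat \<Rightarrow> nat \<Rightarrow> bool" where
  "inC col c j \<longleftrightarrow> (j = 0 \<and> c \<le> 1) \<or> (j \<noteq> 0 \<and> col j = c)"

lemma card_inC:
  assumes m2: "m \<ge> 2" and x: "x \<noteq> 0 \<longrightarrow> col x < m"
  shows "card {c. c < m \<and> inC col c x} = (if x = 0 then 2 else 1)"
proof (cases "x = 0")
  case True
  then have "{c. c < m \<and> inC col c x} = {0, 1}" using m2 unfolding inC_def by auto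
  then show ?thesis using True by simp
next
  case False
  then have "{c. c < m \<and> inC col c x} = {col x}" using x unfolding inC_def by auto
  then show ?thesis using False by simp
qed

lemma count_inC:
  assumes fin: "finite T" and m2: "m \<ge> 2" and cm: "\<forall>j\<in>T. j \<noteq> 0 \<longrightarrow> col j < m"
  shows "(\<Sum>c<m. card {j\<in>T. inC col c j}) = card T + (if 0 \<in> T then 1 else 0)"
  using fin cm
proof (induction T rule: finite_induct)
  case empty
  then show ?case by simp
next
  case (insert x T)
  have eq: "\<And>c. card {j\<in>insert x T. inC col c j} = card {j\<in>T. inC col c j} + (if inC col c x then 1 else 0)"
  proof -
    fix c
    show "card {j\<in>insert x T. inC col c j} = card {j\<in>T. inC col c j} + (if inC col c x then 1 else 0)"
    proof (cases "inC col c x")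
      case True
      then have "{j\<in>insert x T. inC col c j} = insert x {j\<in>T. inC col c j}" by auto
      then show ?thesis using True insert.hyps by simp
    next
      case False
      then have "{j\<in>insert x T. inC col c j} = {j\<in>T. inC col c j}" by auto
      then show ?thesis using False by simp
    qed
  qed
  have "(\<Sum>c<m. card {j\<in>insert x T. inC col c j})
      = (\<Sum>c<m. card {j\<in>T. inC col c j}) + (\<Sum>c<m. (if inC col c x then 1 else 0))"
    by (simp only: eq sum.distrib)
  also have "(\<Sum>c<m. (if inC col c x then 1 else (0::nat))) = card {c. c < m \<and> inC col c x}"
    by (simp add: sum.If_cases lessThan_def Collect_conj_eq)
  also have "\<dots> = (if x = 0 then 2 else 1)" using card_inC[OF m2] insert.prems by simp
  also have "(\<Sum>c<m. card {j\<in>T. inC col c j}) = card T + (if 0 \<in> T then 1 else 0)"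
    using insert by simp
  finally show ?case using insert.hyps by (cases "x = 0") auto
qed

lemma step_color:
  assumes finB: "finite B" and m2: "m \<ge> 2" and cB: "card B + 2 \<le> 2 * m"
    and cm: "\<forall>j\<in>B. j \<noteq> 0 \<longrightarrow> col j < m"
  shows "\<exists>c<m. card {j\<in>B. inC col c j} \<le> 1"
proof (rule ccontr)
  assume "\<not> ?thesis"
  then have "\<forall>c<m. card {j\<in>B. inC col c j} \<ge> 2" by auto
  then have "(\<Sum>c<m. (2::nat)) \<le> (\<Sum>c<m. card {j\<in>B. inC col c j})"
    by (intro sum_mono) auto
  also have "\<dots> = card B + (if 0 \<in> B then 1 else 0)" using count_inC[OF finB m2 cm] .
  finally show False using cB by (simp split: if_splits)
qed

lemma exists_col:
  assumes elim: "elimination_ordering V E k xs" and m2: "m \<ge> 2" and km: "k + 2 \<le> 2 * m"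
  shows "p \<le> length xs \<Longrightarrow> \<exists>col. \<forall>i. 1 \<le> i \<and> i < p \<longrightarrow> col i < m \<and>
      card {j. j < i \<and> inC col (col i) j \<and> adj E (xs ! j) (xs ! i)} \<le> 1"
proof (induction p)
  case 0
  then show ?case by auto
next
  case (Suc p)
  then obtain col where col: "\<forall>i. 1 \<le> i \<and> i < p \<longrightarrow> col i < m \<and>
      card {j. j < i \<and> inC col (col i) j \<and> adj E (xs ! j) (xs ! i)} \<le> 1" by auto
  define B where "B = {j. j < p \<and> adj E (xs ! j) (xs ! p)}"
  have finB: "finite B" unfolding B_def by simp
  have "card B \<le> k" using elim Suc.prems unfolding elimination_ordering_def B_def by auto
  then have cB: "card B + 2 \<le> 2 * m" using km by simp
  have cm: "\<forall>j\<in>B. j \<noteq> 0 \<longrightarrow> col j < m" using col unfolding B_def by auto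
  obtain c where c: "c < m" "card {j\<in>B. inC col c j} \<le> 1"
    using step_color[OF finB m2 cB cm] by blast
  define col' where "col' = col(p := c)"
  have "\<forall>i. 1 \<le> i \<and> i < Suc p \<longrightarrow> col' i < m \<and>
      card {j. j < i \<and> inC col' (col' i) j \<and> adj E (xs ! j) (xs ! i)} \<le> 1"
  proof (intro allI impI)
    fix i assume i: "1 \<le> i \<and> i < Suc p"
    show "col' i < m \<and> card {j. j < i \<and> inC col' (col' i) j \<and> adj E (xs ! j) (xs ! i)} \<le> 1"
    proof (cases "i = p")
      case True
      have "{j. j < i \<and> inC col' (col' i) j \<and> adj E (xs ! j) (xs ! i)} = {j\<in>B. inC col c j}"
        using True unfolding B_def col'_def inC_def by auto
      then show ?thesis using c True col'_def by simp
    next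
      case False
      then have ip: "i < p" using i by simp
      have "{j. j < i \<and> inC col' (col' i) j \<and> adj E (xs ! j) (xs ! i)}
          = {j. j < i \<and> inC col (col i) j \<and> adj E (xs ! j) (xs ! i)}"
        using ip unfolding col'_def inC_def by auto
      then show ?thesis using col i ip col'_def by simp
    qed
  qed
  then show ?case by blast
qed

theorem mainTheorem2:
  fixes V :: "'a set" and E :: "'a set set" and k :: nat
  assumes "graph V E"
    and "k \<ge> 2" and "even k"
    and "degeneracy V E = k"
  shows "real (fvs_number V E) < real k / real (k + 2) * real (card V)"
proof -
  have finV: "finite V" using assms(1) unfolding graph_def by simp
  obtain ys where ys: "distinct ys" "set ys = V" using finV finite_distinct_list by blast
  have "elimination_ordering V E (length ys) ys"
    unfolding elimination_ordering_def
  proof (intro conjI allI impI)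
    fix i assume "i < length ys"
    have "{j. j < i \<and> adj E (ys ! j) (ys ! i)} \<subseteq> {..<i}" by auto
    then have "card {j. j < i \<and> adj E (ys ! j) (ys ! i)} \<le> i"
      by (metis card_lessThan card_mono finite_lessThan)
    then show "card {j. j < i \<and> adj E (ys ! j) (ys ! i)} \<le> length ys" using \<open>i < length ys\<close> by simp
  qed (use ys in auto)
  then have "\<exists>kk xs. elimination_ordering V E kk xs" by blast
  then have "\<exists>xs. elimination_ordering V E (degeneracy V E) xs"
    unfolding degeneracy_def by (rule LeastI_ex)
  then obtain xs where elim: "elimination_ordering V E k xs" using assms(4) by auto
  have dxs: "distinct xs" and sxs: "set xs = V" using elim unfolding elimination_ordering_def by auto
  define n where "n = length xs"
  have ncard: "card V = n" using dxs sxs n_def distinct_card by fastforce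
  have npos: "n \<ge> 1"
  proof (rule ccontr)
    assume "\<not> n \<ge> 1"
    then have "xs = []" using n_def by (cases xs) auto
    then have "elimination_ordering V E 0 []" using elim unfolding elimination_ordering_def by simp
    then have "degeneracy V E \<le> 0" unfolding degeneracy_def by (metis Least_le)
    then show False using assms by simp
  qed
  define m where "m = k div 2 + 1"
  have m2: "m \<ge> 2" using assms m_def by auto
  have km: "k + 2 = 2 * m" using assms m_def by auto
  obtain col where col: "\<forall>i. 1 \<le> i \<and> i < n \<longrightarrow> col i < m \<and>
      card {j. j < i \<and> inC col (col i) j \<and> adj E (xs ! j) (xs ! i)} \<le> 1"
    using exists_col[OF elim m2, of n] km n_def by auto
  define S where "S = (\<lambda>c. {i. i < n \<and> inC col c i})"
  have sumS: "(\<Sum>c<m. card (S c)) = n + 1"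
  proof -
    have "(\<Sum>c<m. card {j\<in>{..<n}. inC col c j}) = card {..<n} + (if 0 \<in> {..<n} then 1 else 0)"
      by (rule count_inC) (use m2 col in auto)
    moreover have "\<And>c. {j\<in>{..<n}. inC col c j} = S c" unfolding S_def by auto
    ultimately show ?thesis using npos by simp
  qed
  obtain c where c: "c < m" "n + 1 \<le> m * card (S c)"
  proof (rule ccontr)
    assume "\<not> thesis"
    then have "\<forall>c<m. m * card (S c) \<le> n" using that by force
    then have "(\<Sum>c<m. m * card (S c)) \<le> (\<Sum>c<m. n)" by (intro sum_mono) auto
    then have "m * (n + 1) \<le> m * n" using sumS by (simp add: sum_distrib_left[symmetric])
    then show False using m2 by simp
  qed
  have Ssub: "S c \<subseteq> {..<length xs}" unfolding S_def n_def by auto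
  have good: "\<forall>i\<in>S c. card {j\<in>S c. j < i \<and> adj E (xs ! j) (xs ! i)} \<le> 1"
  proof
    fix i assume iS: "i \<in> S c"
    show "card {j\<in>S c. j < i \<and> adj E (xs ! j) (xs ! i)} \<le> 1"
    proof (cases "i = 0")
      case True
      then show ?thesis by simp
    next
      case False
      then have ci: "col i = c" "i < n" using iS unfolding S_def inC_def by auto
      have "{j\<in>S c. j < i \<and> adj E (xs ! j) (xs ! i)} \<subseteq> {j. j < i \<and> inC col (col i) j \<and> adj E (xs ! j) (xs ! i)}"
        using ci unfolding S_def by auto
      moreover have "finite {j. j < i \<and> inC col (col i) j \<and> adj E (xs ! j) (xs ! i)}" by simp
      ultimately have "card {j\<in>S c. j < i \<and> adj E (xs ! j) (xs ! i)} \<le> card {j. j < i \<and> inC col (col i) j \<and> adj E (xs ! j) (xs ! i)}"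
        by (rule card_mono[rotated])
      also have "\<dots> \<le> 1" using col ci False by auto
      finally show ?thesis .
    qed
  qed
  have acyc: "acyclic_induced E ((!) xs ` S c)" using good_acyclic[OF dxs Ssub good] .
  define F where "F = V - (!) xs ` S c"
  have imgsub: "(!) xs ` S c \<subseteq> V" using Ssub sxs by auto
  have "V - F = (!) xs ` S c" using imgsub F_def by auto
  then have fvs: "feedback_vertex_set V E F" unfolding feedback_vertex_set_def F_def using acyc by auto
  have cardimg: "card ((!) xs ` S c) = card (S c)"
    using dxs Ssub by (intro card_image inj_on_nth) auto
  have "card F = n - card (S c)" unfolding F_def using imgsub finV ncard cardimg
    by (simp add: card_Diff_subset finite_subset)
  moreover have "card (S c) \<le> n"
    using Ssub n_def by (metis card_lessThan card_mono finite_lessThan)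
  moreover have "fvs_number V E \<le> card F" unfolding fvs_number_def
    using fvs by (intro Least_le) blast
  ultimately have f1: "real (fvs_number V E) \<le> real n - real (card (S c))" by linarith
  have f2: "real n + 1 \<le> real m * real (card (S c))" using c(2) by (metis of_nat_add of_nat_le_iff of_nat_mult of_nat_1)
  have mpos: "real m > 0" using m2 by simp
  have kreal: "real k = 2 * real m - 2" using km by (metis of_nat_add of_nat_mult of_nat_numeral add_diff_cancel_right')
  have "real k / real (k + 2) * real (card V) = (real m - 1) / real m * real n"
  proof -
    have r2: "real (k + 2) = 2 * real m" using km by (metis of_nat_mult of_nat_numeral)
    have "real k = real (k + 2) - 2" by simp
    have r3: "real k * real n + real n * 2 = real m * (real n * 2)"
    proof -
      have "real k * real n + real n * 2 = (real k + 2) * real n" by (simp add: algebra_simps)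
      also have "\<dots> = real m * (real n * 2)" using r2 by simp
      finally show ?thesis .
    qed
    then show ?thesis using r2 ncard mpos by (simp add: field_simps)
  qed
  also have "\<dots> = real n - real n / real m" using mpos by (simp add: field_simps)
  finally have eq: "real k / real (k + 2) * real (card V) = real n - real n / real m" .
  have "real n / real m < real (card (S c))" using f2 mpos by (simp add: field_simps)
  then show ?thesis using f1 eq by linarith
qed

end
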